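(* Let $\mathcal{A}$ be a separating union-closed family with base set $[n]$ and height $h=4$, and let $\mathcal{B}=\{B_1,B_2,B_3\}$ be a choice of $\mathcal{B}(\mathcal{A})$ with $|\mathcal{B}|=3$. Suppose $|B|=n-1$, where $B=b(\mathcal{A}_{<n/2})$, and let $A \in \mathcal{A}_{<n/2} \setminus \mathcal{B}$. Then either $A = \bigcup_{i=1}^3 \mathrm{irr}_{\mathcal{B}}(B_i)$, or $A$ satisfies exactly one of the following three conditions: (i) $A \cap \mathrm{irr}_{\mathcal{B}}(B_1) = \emptyset$ and $(B_2 \cup B_3) \setminus (B_2 \cap B_3) \subseteq A$; (ii) $A \cap \mathrm{irr}_{\mathcal{B}}(B_2) = \emptyset$ and $(B_1 \cup B_3) \setminus (B_1 \cap B_3) \subseteq A$; (iii) $A \cap \mathrm{irr}_{\mathcal{B}}(B_3) = \emptyset$ and $(B_1 \cup B_2) \setminus (B_1 \cap B_2) \subseteq A$.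
   Context: A family of sets $\mathcal{A}$ is union-closed if it is a finite family of distinct finite sets with at least one nonempty member set, and $X,Y\in\mathcal{A}$ implies $X\cup Y\in\mathcal{A}$ (the empty set may be a member). For a family $\mathcal{F}$, $b(\mathcal{F})=\bigcup_{F\in\mathcal{F}}F$; the base set $b(\mathcal{A})$ is denoted $[n]=\{1,\dots,n\}$. $\mathcal{A}$ is separating if for any two distinct $x,y\in[n]$ there is $A\in\mathcal{A}$ containing exactly one of $x,y$. A chain in $\mathcal{A}$ is a subfamily any two distinct members of which are comparable under proper inclusion; the height $h$ of $\mathcal{A}$ is the maximum size of a chain in $\mathcal{A}$. For real $x\ge 0$, $\mathcal{A}_{<x}=\{A\in\mathcal{A} : |A|<x\}$. For $\mathcal{S}\subseteq\mathcal{A}$ and $S\in\mathcal{S}$, $\mathrm{irr}_{\mathcal{S}}(S)=\{s\in S : s\notin b(\mathcal{S}\setminus\{S\})\}$, and $\mathcal{S}$ is irredundant if $\mathrm{irr}_{\mathcal{S}}(S)\neq\emptyset$ for every $S\in\mathcal{S}$. With $B=b(\mathcal{A}_{<n/2})$, $\mathcal{B}(\mathcal{A})$ denotes any irredundant subfamily of $\mathcal{A}_{<n/2}$ of minimum size such that $b(\mathcal{B}(\mathcal{A}))=B$. *)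

theory Defs
  imports Complex_Main
begin

definition union_closed :: "nat set set \<Rightarrow> bool" where
  "union_closed \<A> \<longleftrightarrow> finite \<A> \<and> (\<forall>A\<in>\<A>. finite A) \<and> (\<exists>A\<in>\<A>. A \<noteq> {})
     \<and> (\<forall>X\<in>\<A>. \<forall>Y\<in>\<A>. X \<union> Y \<in> \<A>)"

definition separating :: "nat set set \<Rightarrow> bool" where
  "separating \<A> \<longleftrightarrow> (\<forall>x\<in>\<Union>\<A>. \<forall>y\<in>\<Union>\<A>. x \<noteq> y \<longrightarrow> (\<exists>A\<in>\<A>. (x \<in> A) \<noteq> (y \<in> A)))"

definition is_chain_fam :: "nat set set \<Rightarrow> bool" where
  "is_chain_fam \<C> \<longleftrightarrow> (\<forall>X\<in>\<C>. \<forall>Y\<in>\<C>. X \<subseteq> Y \<or> Y \<subseteq> X)"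

definition height :: "nat set set \<Rightarrow> nat" where
  "height \<A> = Max {card \<C> | \<C>. \<C> \<subseteq> \<A> \<and> is_chain_fam \<C>}"

definition below :: "nat set set \<Rightarrow> real \<Rightarrow> nat set set" where
  "below \<A> x = {A \<in> \<A>. real (card A) < x}"

definition irr :: "nat set set \<Rightarrow> nat set \<Rightarrow> nat set" where
  "irr \<S> S = {s \<in> S. s \<notin> \<Union>(\<S> - {S})}"

definition irredundant :: "nat set set \<Rightarrow> bool" where
  "irredundant \<S> \<longleftrightarrow> (\<forall>S\<in>\<S>. irr \<S> S \<noteq> {})"

definition is_B_choice :: "nat set set \<Rightarrow> nat \<Rightarrow> nat set set \<Rightarrow> bool" where
  "is_B_choice \<A> n \<B> \<longleftrightarrow>
     \<B> \<subseteq> below \<A> (real n / 2) \<and> irredundant \<B> \<and> \<Union>\<B> = \<Union>(below \<A> (real n / 2)) \<and>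
     (\<forall>\<B>'. \<B>' \<subseteq> below \<A> (real n / 2) \<and> irredundant \<B>' \<and> \<Union>\<B>' = \<Union>(below \<A> (real n / 2))
        \<longrightarrow> card \<B> \<le> card \<B>')"

end

theory Submission imports Defs begin

lemma no5:
  assumes uc: "union_closed F" and h: "height F = 4"
    and m: "X1 \<in> F" "X2 \<in> F" "X3 \<in> F" "X4 \<in> F" "X5 \<in> F"
    and c: "X1 \<subset> X2" "X2 \<subset> X3" "X3 \<subset> X4" "X4 \<subset> X5"
  shows False
proof -
  let ?C = "{X1, X2, X3, X4, X5}"
  have fin: "finite F" using uc unfolding union_closed_def by blast
  have ch: "is_chain_fam ?C" using c unfolding is_chain_fam_def by blast
  have sub: "?C \<subseteq> F" using m by blast
  have "X1 \<noteq> X2" "X1 \<noteq> X3" "X1 \<noteq> X4" "X1 \<noteq> X5" "X2 \<noteq> X3" "X2 \<noteq> X4" "X2 \<noteq> X5"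
       "X3 \<noteq> X4" "X3 \<noteq> X5" "X4 \<noteq> X5" using c by blast+
  then have card5: "card ?C = 5" by simp
  have "{card C | C. C \<subseteq> F \<and> is_chain_fam C} \<subseteq> card ` Pow F" by blast
  then have "finite {card C | C. C \<subseteq> F \<and> is_chain_fam C}"
    using fin by (meson finite_Pow_iff finite_imageI finite_subset)
  moreover have "card ?C \<in> {card C | C. C \<subseteq> F \<and> is_chain_fam C}" using ch sub by blast
  ultimately have "card ?C \<le> height F" unfolding height_def by (rule Max_ge)
  then show False using h card5 by simp
qed

lemma uc_Un: "union_closed F \<Longrightarrow> X \<in> F \<Longrightarrow> Y \<in> F \<Longrightarrow> X \<union> Y \<in> F"
  unfolding union_closed_def by blast

lemma uc_Union: assumes "union_closed F" shows "\<Union>F \<in> F"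
proof -
  have fin: "finite F" and ne: "F \<noteq> {}" using assms unfolding union_closed_def by blast+
  have "\<And>S. finite S \<Longrightarrow> S \<noteq> {} \<Longrightarrow> S \<subseteq> F \<Longrightarrow> \<Union>S \<in> F"
  proof -
    fix S :: "nat set set" assume "finite S" "S \<noteq> {}" "S \<subseteq> F"
    then show "\<Union>S \<in> F"
      by (induction S rule: finite_ne_induct) (auto intro: uc_Un[OF assms])
  qed
  then show ?thesis using fin ne by blast
qed

lemma condC:
  assumes uc: "union_closed F" and h: "height F = 4"
    and m: "X \<in> F" "Y \<in> F" "Z \<in> F" "A \<in> F" "N \<in> F"
    and iX: "X - (Y \<union> Z) \<noteq> {}" and iY: "Y - (X \<union> Z) \<noteq> {}" and iZ: "Z - (X \<union> Y) \<noteq> {}"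
    and AX: "A \<noteq> X" and AB: "A \<subseteq> X \<union> Y \<union> Z" and BN: "X \<union> Y \<union> Z \<subset> N"
  shows "Y \<subseteq> A \<union> X \<or> Z - (X \<union> Y) \<subseteq> A"
proof (rule ccontr)
  assume neg: "\<not> ?thesis"
  have u: "\<And>P Q. P \<in> F \<Longrightarrow> Q \<in> F \<Longrightarrow> P \<union> Q \<in> F" using uc_Un[OF uc] .
  have "\<not> A \<subseteq> X"
  proof
    assume "A \<subseteq> X"
    then have "A \<subset> X" using AX by blast
    moreover have "X \<subset> X \<union> Y" using iY by blast
    moreover have "X \<union> Y \<subset> X \<union> Y \<union> Z" using iZ by blast
    ultimately show False using no5[OF uc h m(4) m(1) u[OF m(1) m(2)] u[OF u[OF m(1) m(2)] m(3)] m(5)] BN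
      by blast
  qed
  then have "X \<subset> X \<union> A" by blast
  moreover have "X \<union> A \<subset> X \<union> A \<union> Y" using neg by blast
  moreover have "X \<union> A \<union> Y \<subset> X \<union> Y \<union> Z" using neg AB by blast
  ultimately show False
    using no5[OF uc h m(1) u[OF m(1) m(4)] u[OF u[OF m(1) m(4)] m(2)] u[OF u[OF m(1) m(2)] m(3)] m(5)] BN
    by blast
qed

lemma condD:
  assumes uc: "union_closed F" and h: "height F = 4"
    and m: "X \<in> F" "Y \<in> F" "Z \<in> F" "A \<in> F" "N \<in> F"
    and iZ: "Z - (X \<union> Y) \<noteq> {}"
    and AB: "A \<subseteq> X \<union> Y \<union> Z" and BN: "X \<union> Y \<union> Z \<subset> N"
    and ZA: "Z \<subseteq> A \<union> Y" and AY: "A \<union> Y \<noteq> X \<union> Y \<union> Z"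
  shows "A \<inter> (X - (Y \<union> Z)) = {}"
proof (rule ccontr)
  assume neg: "\<not> ?thesis"
  have u: "\<And>P Q. P \<in> F \<Longrightarrow> Q \<in> F \<Longrightarrow> P \<union> Q \<in> F" using uc_Un[OF uc] .
  have "Y \<subset> Y \<union> Z" using iZ by blast
  moreover have "Y \<union> Z \<subset> Y \<union> A" using neg ZA by blast
  moreover have "Y \<union> A \<subset> X \<union> Y \<union> Z" using AY AB by blast
  ultimately show False
    using no5[OF uc h m(2) u[OF m(2) m(3)] u[OF m(2) m(4)] u[OF u[OF m(1) m(2)] m(3)] m(5)] BN
    by blast
qed


lemma cover2:
  assumes ch: "is_B_choice F n {B1, B2, B3}" and c3: "card {B1, B2, B3} = 3"
    and X: "X \<in> below F (real n / 2)" and Y: "Y \<in> below F (real n / 2)"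
    and XY: "X \<noteq> Y" and Yne: "Y \<noteq> {}"
    and U: "X \<union> Y = \<Union>(below F (real n / 2))"
  shows False
proof -
  let ?b = "below F (real n / 2)"
  have mn: "\<And>S. S \<subseteq> ?b \<Longrightarrow> irredundant S \<Longrightarrow> \<Union>S = \<Union>?b \<Longrightarrow> 3 \<le> card S"
  proof -
    fix S assume "S \<subseteq> ?b" "irredundant S" "\<Union>S = \<Union>?b"
    moreover have "\<forall>S. S \<subseteq> ?b \<and> irredundant S \<and> \<Union>S = \<Union>?b \<longrightarrow> card {B1, B2, B3} \<le> card S"
      using ch unfolding is_B_choice_def by blast
    ultimately show "3 \<le> card S" using c3 by auto
  qed
  consider "X \<subseteq> Y" | "Y \<subseteq> X" | "\<not> X \<subseteq> Y \<and> \<not> Y \<subseteq> X" by blast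
  then show False
  proof cases
    case 1
    have "irr {Y} Y = Y" unfolding irr_def by auto
    then have "irredundant {Y}" using Yne unfolding irredundant_def by simp
    moreover have "\<Union>{Y} = \<Union>?b" using U 1 by auto
    ultimately have "3 \<le> card {Y}" using mn[of "{Y}"] X Y by simp
    then show False by simp
  next
    case 2
    have "irr {X} X = X" unfolding irr_def by auto
    moreover have "X \<noteq> {}" using Yne 2 by blast
    ultimately have "irredundant {X}" unfolding irredundant_def by simp
    moreover have "\<Union>{X} = \<Union>?b" using U 2 by auto
    ultimately have "3 \<le> card {X}" using mn[of "{X}"] X Y by simp
    then show False by simp
  next
    case 3
    have "irr {X, Y} X = X - Y" "irr {X, Y} Y = Y - X" using XY unfolding irr_def by auto
    then have "irredundant {X, Y}" using 3 unfolding irredundant_def by auto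
    moreover have "\<Union>{X, Y} = \<Union>?b" using U by auto
    ultimately have "3 \<le> card {X, Y}" using mn[of "{X, Y}"] X Y by simp
    then show False by (simp add: card_insert_if split: if_splits)
  qed
qed

lemma count3:
  fixes B1 B2 B3 :: "nat set"
  assumes "finite B1" "finite B2" "finite B3"
  shows "card B1 + card B2 + card B3 \<ge> card (B1 \<union> B2 \<union> B3) +
     card ((B1 \<union> B2 \<union> B3) - ((B1 - (B2 \<union> B3)) \<union> (B2 - (B1 \<union> B3)) \<union> (B3 - (B1 \<union> B2))))"
proof -
  have e1: "card B1 + card B2 = card (B1 \<union> B2) + card (B1 \<inter> B2)"
    using card_Un_Int assms by blast
  have e2: "card (B1 \<union> B2) + card B3 = card (B1 \<union> B2 \<union> B3) + card ((B1 \<union> B2) \<inter> B3)"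
    using card_Un_Int assms by (metis finite_UnI)
  have "(B1 \<union> B2 \<union> B3) - ((B1 - (B2 \<union> B3)) \<union> (B2 - (B1 \<union> B3)) \<union> (B3 - (B1 \<union> B2)))
      = (B1 \<inter> B2) \<union> ((B1 \<union> B2) \<inter> B3)" by blast
  then have "card ((B1 \<union> B2 \<union> B3) - ((B1 - (B2 \<union> B3)) \<union> (B2 - (B1 \<union> B3)) \<union> (B3 - (B1 \<union> B2))))
      \<le> card (B1 \<inter> B2) + card ((B1 \<union> B2) \<inter> B3)"
    by (simp only: card_Un_le)
  then show ?thesis using e1 e2 by linarith
qed

theorem propositionI:
  fixes \<A> :: "nat set set" and n :: nat and B1 B2 B3 A :: "nat set"
  assumes "union_closed \<A>" and "\<Union>\<A> = {1..n}" and "separating \<A>"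
    and "height \<A> = 4"
    and "is_B_choice \<A> n {B1, B2, B3}" and "card {B1, B2, B3} = 3"
    and "card (\<Union>(below \<A> (real n / 2))) = n - 1"
    and "A \<in> below \<A> (real n / 2) - {B1, B2, B3}"
  shows "A = irr {B1, B2, B3} B1 \<union> irr {B1, B2, B3} B2 \<union> irr {B1, B2, B3} B3 \<or>
    (let c1 = (A \<inter> irr {B1, B2, B3} B1 = {} \<and> (B2 \<union> B3) - (B2 \<inter> B3) \<subseteq> A);
         c2 = (A \<inter> irr {B1, B2, B3} B2 = {} \<and> (B1 \<union> B3) - (B1 \<inter> B3) \<subseteq> A);
         c3 = (A \<inter> irr {B1, B2, B3} B3 = {} \<and> (B1 \<union> B2) - (B1 \<inter> B2) \<subseteq> A)
     in (c1 \<and> \<not> c2 \<and> \<not> c3) \<or> (\<not> c1 \<and> c2 \<and> \<not> c3) \<or> (\<not> c1 \<and> \<not> c2 \<and> c3))"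
proof -
  note uc = assms(1) and h = assms(4) and ch = assms(5) and c3 = assms(6)
  let ?b = "below \<A> (real n / 2)"
  have d12: "B1 \<noteq> B2" and d13: "B1 \<noteq> B3" and d23: "B2 \<noteq> B3"
    using c3 by (auto simp: card_insert_if split: if_splits)
  have irr1: "irr {B1, B2, B3} B1 = B1 - (B2 \<union> B3)"
    and irr2: "irr {B1, B2, B3} B2 = B2 - (B1 \<union> B3)"
    and irr3: "irr {B1, B2, B3} B3 = B3 - (B1 \<union> B2)"
    using d12 d13 d23 unfolding irr_def by auto
  have ne1: "B1 - (B2 \<union> B3) \<noteq> {}" and ne2: "B2 - (B1 \<union> B3) \<noteq> {}" and ne3: "B3 - (B1 \<union> B2) \<noteq> {}"
    using ch irr1 irr2 irr3 unfolding is_B_choice_def irredundant_def by auto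
  have Bb: "B1 \<in> ?b" "B2 \<in> ?b" "B3 \<in> ?b" using ch unfolding is_B_choice_def by auto
  have Ab: "A \<in> ?b" and AnB: "A \<noteq> B1" "A \<noteq> B2" "A \<noteq> B3" using assms(8) by auto
  have Bu: "\<Union>?b = B1 \<union> B2 \<union> B3" using ch unfolding is_B_choice_def by auto
  have mF: "B1 \<in> \<A>" "B2 \<in> \<A>" "B3 \<in> \<A>" "A \<in> \<A>" using Bb Ab unfolding below_def by auto
  have fin: "finite B1" "finite B2" "finite B3" "finite A"
    using mF uc unfolding union_closed_def by auto
  have cards: "2 * card B1 < n" "2 * card B2 < n" "2 * card B3 < n" "2 * card A < n"
    using Bb Ab unfolding below_def by auto
  have AB: "A \<subseteq> B1 \<union> B2 \<union> B3" using Ab Bu by blast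
  have NF: "{1..n} \<in> \<A>" using uc_Union[OF uc] assms(2) by simp
  have BN0: "B1 \<union> B2 \<union> B3 \<subseteq> {1..n}" using mF assms(2) by blast
  have n1: "n \<ge> 1" using cards by linarith
  have cB: "card (B1 \<union> B2 \<union> B3) = n - 1" using assms(7) Bu by simp
  have BN: "B1 \<union> B2 \<union> B3 \<subset> {1..n}" using BN0 cB n1 by auto
  have F3: "A \<union> B1 \<noteq> B1 \<union> B2 \<union> B3" "A \<union> B2 \<noteq> B1 \<union> B2 \<union> B3" "A \<union> B3 \<noteq> B1 \<union> B2 \<union> B3"
    using cover2[OF ch c3 Ab Bb(1) AnB(1)] cover2[OF ch c3 Ab Bb(2) AnB(2)]
      cover2[OF ch c3 Ab Bb(3) AnB(3)] ne1 ne2 ne3 Bu by auto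
  have C123: "B2 \<subseteq> A \<union> B1 \<or> B3 - (B1 \<union> B2) \<subseteq> A"
    using condC[OF uc h mF(1) mF(2) mF(3) mF(4) NF ne1 ne2 ne3 AnB(1) AB BN] .
  have C132: "B3 \<subseteq> A \<union> B1 \<or> B2 - (B1 \<union> B3) \<subseteq> A"
    using condC[OF uc h mF(1) mF(3) mF(2) mF(4) NF] ne1 ne2 ne3 AnB AB BN
    by (simp add: Un_ac; blast)
  have C213: "B1 \<subseteq> A \<union> B2 \<or> B3 - (B1 \<union> B2) \<subseteq> A"
    using condC[OF uc h mF(2) mF(1) mF(3) mF(4) NF] ne1 ne2 ne3 AnB AB BN
    by (simp add: Un_ac; blast)
  have C231: "B3 \<subseteq> A \<union> B2 \<or> B1 - (B2 \<union> B3) \<subseteq> A"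
    using condC[OF uc h mF(2) mF(3) mF(1) mF(4) NF] ne1 ne2 ne3 AnB AB BN
    by (simp add: Un_ac; blast)
  have C312: "B1 \<subseteq> A \<union> B3 \<or> B2 - (B1 \<union> B3) \<subseteq> A"
    using condC[OF uc h mF(3) mF(1) mF(2) mF(4) NF] ne1 ne2 ne3 AnB AB BN
    by (simp add: Un_ac; blast)
  have C321: "B2 \<subseteq> A \<union> B3 \<or> B1 - (B2 \<union> B3) \<subseteq> A"
    using condC[OF uc h mF(3) mF(2) mF(1) mF(4) NF] ne1 ne2 ne3 AnB AB BN
    by (simp add: Un_ac; blast)
  have D1: "B3 \<subseteq> A \<union> B2 \<Longrightarrow> A \<inter> (B1 - (B2 \<union> B3)) = {}"
    using condD[OF uc h mF(1) mF(2) mF(3) mF(4) NF] ne1 ne2 ne3 F3 AB BN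
    by (simp add: Un_ac; blast)
  have D2: "B3 \<subseteq> A \<union> B1 \<Longrightarrow> A \<inter> (B2 - (B1 \<union> B3)) = {}"
    using condD[OF uc h mF(2) mF(1) mF(3) mF(4) NF] ne1 ne2 ne3 F3 AB BN
    by (simp add: Un_ac; blast)
  have D3: "B2 \<subseteq> A \<union> B1 \<Longrightarrow> A \<inter> (B3 - (B1 \<union> B2)) = {}"
    using condD[OF uc h mF(3) mF(1) mF(2) mF(4) NF] ne1 ne2 ne3 F3 AB BN
    by (simp add: Un_ac; blast)
  define I1 where "I1 = B1 - (B2 \<union> B3)"
  define I2 where "I2 = B2 - (B1 \<union> B3)"
  define I3 where "I3 = B3 - (B1 \<union> B2)"
  have p12: "I1 \<subseteq> A \<or> I2 \<subseteq> A"
  proof (rule ccontr)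
    assume "\<not> (I1 \<subseteq> A \<or> I2 \<subseteq> A)"
    then have n1: "\<not> I1 \<subseteq> A" and n2: "\<not> I2 \<subseteq> A" by auto
    have "B1 \<subseteq> A \<union> B3" using C312 n2 unfolding I2_def by blast
    moreover have "B2 \<subseteq> A \<union> B3" using C321 n1 unfolding I1_def by blast
    ultimately have "A \<union> B3 = B1 \<union> B2 \<union> B3" using AB by blast
    then show False using F3(3) by blast
  qed
  have p13: "I1 \<subseteq> A \<or> I3 \<subseteq> A"
  proof (rule ccontr)
    assume "\<not> (I1 \<subseteq> A \<or> I3 \<subseteq> A)"
    then have n1: "\<not> I1 \<subseteq> A" and n3: "\<not> I3 \<subseteq> A" by auto
    have "B1 \<subseteq> A \<union> B2" using C213 n3 unfolding I3_def by blast
    moreover have "B3 \<subseteq> A \<union> B2" using C231 n1 unfolding I1_def by blast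
    ultimately have "A \<union> B2 = B1 \<union> B2 \<union> B3" using AB by blast
    then show False using F3(2) by blast
  qed
  have p23: "I2 \<subseteq> A \<or> I3 \<subseteq> A"
  proof (rule ccontr)
    assume "\<not> (I2 \<subseteq> A \<or> I3 \<subseteq> A)"
    then have n2: "\<not> I2 \<subseteq> A" and n3: "\<not> I3 \<subseteq> A" by auto
    have "B2 \<subseteq> A \<union> B1" using C123 n3 unfolding I3_def by blast
    moreover have "B3 \<subseteq> A \<union> B1" using C132 n2 unfolding I2_def by blast
    ultimately have "A \<union> B1 = B1 \<union> B2 \<union> B3" using AB by blast
    then show False using F3(1) by blast
  qed
  let ?S = "{B1, B2, B3}"
  have U1: "I1 \<subseteq> B1 \<union> B2 \<union> B3" "I2 \<subseteq> B1 \<union> B2 \<union> B3" "I3 \<subseteq> B1 \<union> B2 \<union> B3"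
    unfolding I1_def I2_def I3_def by blast+
  have finB: "finite (B1 \<union> B2 \<union> B3)" using fin by simp
  have finU: "finite (I1 \<union> I2 \<union> I3)" using finB U1 by (meson Un_least finite_subset)
  have Nne1: "I1 \<noteq> {}" "I2 \<noteq> {}" "I3 \<noteq> {}" using ne1 ne2 ne3 unfolding I1_def I2_def I3_def .
  have ir: "irr ?S B1 = I1" "irr ?S B2 = I2" "irr ?S B3 = I3"
    using irr1 irr2 irr3 unfolding I1_def I2_def I3_def .
  consider "I1 \<subseteq> A" "I2 \<subseteq> A" "I3 \<subseteq> A" | "\<not> I1 \<subseteq> A" "I2 \<subseteq> A" "I3 \<subseteq> A"
    | "I1 \<subseteq> A" "\<not> I2 \<subseteq> A" "I3 \<subseteq> A" | "I1 \<subseteq> A" "I2 \<subseteq> A" "\<not> I3 \<subseteq> A"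
    using p12 p13 p23 by argo
  then show ?thesis
  proof cases
    case 1
    have "A = I1 \<union> I2 \<union> I3"
    proof (rule ccontr)
      assume "A \<noteq> I1 \<union> I2 \<union> I3"
      then have "I1 \<union> I2 \<union> I3 \<subset> A" using 1 by blast
      then have "card (I1 \<union> I2 \<union> I3) < card A" by (rule psubset_card_mono[OF fin(4)])
      then have ca: "card (I1 \<union> I2 \<union> I3) + 1 \<le> card A" by simp
      have Usub: "I1 \<union> I2 \<union> I3 \<subseteq> B1 \<union> B2 \<union> B3" using U1 by (rule Un_least[OF Un_least])
      have cs1: "card ((B1 \<union> B2 \<union> B3) - (I1 \<union> I2 \<union> I3)) = card (B1 \<union> B2 \<union> B3) - card (I1 \<union> I2 \<union> I3)"
        by (rule card_Diff_subset[OF finU Usub])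
      have cs2: "card (I1 \<union> I2 \<union> I3) \<le> card (B1 \<union> B2 \<union> B3)" by (rule card_mono[OF finB Usub])
      have "card B1 + card B2 + card B3 \<ge> card (B1 \<union> B2 \<union> B3) +
          card ((B1 \<union> B2 \<union> B3) - (I1 \<union> I2 \<union> I3))"
        using count3[OF fin(1-3)] unfolding I1_def I2_def I3_def .
      then show False using ca cs1 cs2 cB cards n1 by linarith
    qed
    then have "A = irr ?S B1 \<union> irr ?S B2 \<union> irr ?S B3" unfolding ir .
    then show ?thesis by (rule disjI1)
  next
    case 2
    have a: "B3 \<subseteq> A \<union> B2" "B2 \<subseteq> A \<union> B3" using 2 C231 C321 unfolding I1_def by blast+
    have "A \<inter> I1 = {}" using D1 a unfolding I1_def by blast
    moreover have "(B2 \<union> B3) - (B2 \<inter> B3) \<subseteq> A" using a by blast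
    moreover have "A \<inter> I2 \<noteq> {}" using 2 Nne1 by blast
    moreover have "A \<inter> I3 \<noteq> {}" using 2 Nne1 by blast
    ultimately show ?thesis unfolding ir Let_def by simp
  next
    case 3
    have a: "B3 \<subseteq> A \<union> B1" "B1 \<subseteq> A \<union> B3" using 3 C132 C312 unfolding I2_def by blast+
    have "A \<inter> I2 = {}" using D2 a unfolding I2_def by blast
    moreover have "(B1 \<union> B3) - (B1 \<inter> B3) \<subseteq> A" using a by blast
    moreover have "A \<inter> I1 \<noteq> {}" using 3 Nne1 by blast
    moreover have "A \<inter> I3 \<noteq> {}" using 3 Nne1 by blast
    ultimately show ?thesis unfolding ir Let_def by simp
  next
    case 4
    have a: "B2 \<subseteq> A \<union> B1" "B1 \<subseteq> A \<union> B2" using 4 C123 C213 unfolding I3_def by blast+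
    have "A \<inter> I3 = {}" using D3 a unfolding I3_def by blast
    moreover have "(B1 \<union> B2) - (B1 \<inter> B2) \<subseteq> A" using a by blast
    moreover have "A \<inter> I1 \<noteq> {}" using 4 Nne1 by blast
    moreover have "A \<inter> I2 \<noteq> {}" using 4 Nne1 by blast
    ultimately show ?thesis unfolding ir Let_def by simp
  qed
qed

end
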